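(* Let $F_1,\dots,F_n:\mathbb{R}^d\to\mathbb{R}^d$ with each $F_i$ being $L_i$-Lipschitz, let $F=\frac1n\sum_{i=1}^nF_i$, and let $x^*$ satisfy $F(x^* )=0$. Let $v\in\mathbb{R}^n_+$ be a sampling vector (random, $\mathbb{E}[v_i]=1$ for all $i$) and $g(x)=F_v(x):=\frac1n\sum_{i=1}^n v_iF_i(x)$. Then the Expected Residual condition holds, i.e. there is $\delta$ with $$\mathbb{E}\big\|(g(x)-g(x^* ))-(F(x)-F(x^* ))\big\|^2\le\frac{\delta}{2}\|x-x^*\|^2\quad\forall x\in\mathbb{R}^d.$$ If, in addition, $n\ge 2$ and $v$ is a $\tau$-minibatch sampling for some $\tau\in\{1,\dots,n\}$, then this holds with $$\delta=\frac{2}{n\tau}\,\frac{n-\tau}{n-1}\sum_{i=1}^nL_i^2,\qquad\text{and}\qquad \sigma_*^2:=\mathbb{E}\|g(x^* )\|^2=\frac{1}{n\tau}\,\frac{n-\tau}{n-1}\sum_{i=1}^n\|F_i(x^* )\|^2 .$$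
   Context: A $\tau$-minibatch sampling is the random vector $v\in\mathbb{R}^n$ such that for every subset $S\subseteq\{1,\dots,n\}$ with $|S|=\tau$, $\Pr\big[v=\frac{n}{\tau}\sum_{i\in S}e_i\big]=1/\binom{n}{\tau}$ (it satisfies $\mathbb{E}[v_i]=1$). $L_i$-Lipschitz means $\|F_i(x)-F_i(y)\|\le L_i\|x-y\|$ for all $x,y$. For general sampling vectors $v$ the first claim is meant for $v$ with finite second moments $\mathbb{E}[v_i^2]<\infty$. *)

theory Defs
  imports "HOL-Probability.Probability"
begin

text \<open>Indices are 0,...,n-1 (i.e. i < n) instead of 1,...,n.\<close>

definition Fmean :: "nat \<Rightarrow> (nat \<Rightarrow> real ^ 'd \<Rightarrow> real ^ 'd) \<Rightarrow> real ^ 'd \<Rightarrow> real ^ 'd" where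
  "Fmean n Fs x = (1 / real n) *\<^sub>R (\<Sum>i<n. Fs i x)"

definition Fsamp :: "nat \<Rightarrow> (nat \<Rightarrow> real ^ 'd \<Rightarrow> real ^ 'd) \<Rightarrow> (nat \<Rightarrow> real) \<Rightarrow> real ^ 'd \<Rightarrow> real ^ 'd" where
  "Fsamp n Fs v x = (1 / real n) *\<^sub>R (\<Sum>i<n. v i *\<^sub>R Fs i x)"

definition sampling_vector :: "'w measure \<Rightarrow> nat \<Rightarrow> ('w \<Rightarrow> nat \<Rightarrow> real) \<Rightarrow> bool" where
  "sampling_vector M n v \<longleftrightarrow>
     (\<forall>i<n. (\<lambda>\<omega>. v \<omega> i) \<in> borel_measurable M
          \<and> (\<forall>\<omega>\<in>space M. v \<omega> i \<ge> 0)
          \<and> integrable M (\<lambda>\<omega>. v \<omega> i)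
          \<and> integral\<^sup>L M (\<lambda>\<omega>. v \<omega> i) = 1
          \<and> integrable M (\<lambda>\<omega>. (v \<omega> i)\<^sup>2))"

definition minibatch_sampling :: "'w measure \<Rightarrow> nat \<Rightarrow> nat \<Rightarrow> ('w \<Rightarrow> nat \<Rightarrow> real) \<Rightarrow> bool" where
  "minibatch_sampling M n \<tau> v \<longleftrightarrow>
     (\<forall>i<n. (\<lambda>\<omega>. v \<omega> i) \<in> borel_measurable M)
     \<and> (\<forall>S. S \<subseteq> {..<n} \<and> card S = \<tau> \<longrightarrow>
          {\<omega> \<in> space M. \<forall>i<n. v \<omega> i = (if i \<in> S then real n / real \<tau> else 0)} \<in> sets M
        \<and> measure M {\<omega> \<in> space M. \<forall>i<n. v \<omega> i = (if i \<in> S then real n / real \<tau> else 0)}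
            = 1 / real (n choose \<tau>))"

end

theory Submission
  imports Defs
begin

lemma card_subsets_containing:
  assumes "finite A" "T \<subseteq> A" "card T \<le> k"
  shows "card {S. S \<subseteq> A \<and> card S = k \<and> T \<subseteq> S} = (card A - card T) choose (k - card T)"
proof -
  have fT: "finite T" using assms finite_subset by blast
  have "bij_betw (\<lambda>S. S - T) {S. S \<subseteq> A \<and> card S = k \<and> T \<subseteq> S} {U. U \<subseteq> A - T \<and> card U = k - card T}"
  proof (rule bij_betwI[where g="\<lambda>U. U \<union> T"])
    show "(\<lambda>S. S - T) \<in> {S. S \<subseteq> A \<and> card S = k \<and> T \<subseteq> S} \<rightarrow> {U. U \<subseteq> A - T \<and> card U = k - card T}"
      using fT by (auto simp: card_Diff_subset)
    show "(\<lambda>U. U \<union> T) \<in> {U. U \<subseteq> A - T \<and> card U = k - card T} \<rightarrow> {S. S \<subseteq> A \<and> card S = k \<and> T \<subseteq> S}"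
    proof
      fix U assume U: "U \<in> {U. U \<subseteq> A - T \<and> card U = k - card T}"
      have fU: "finite U" using U assms(1) finite_subset by blast
      have "card (U \<union> T) = card U + card T" using U fU fT by (intro card_Un_disjoint) auto
      then show "U \<union> T \<in> {S. S \<subseteq> A \<and> card S = k \<and> T \<subseteq> S}" using U assms by auto
    qed
  qed auto
  then have "card {S. S \<subseteq> A \<and> card S = k \<and> T \<subseteq> S} = card {U. U \<subseteq> A - T \<and> card U = k - card T}"
    by (rule bij_betw_same_card)
  also have "\<dots> = card (A - T) choose (k - card T)" using assms by (intro n_subsets) auto
  also have "card (A - T) = card A - card T" using assms fT by (simp add: card_Diff_subset)
  finally show ?thesis .
qed

definition Subs :: "nat \<Rightarrow> nat \<Rightarrow> nat set set" where
  "Subs n \<tau> = {S. S \<subseteq> {..<n} \<and> card S = \<tau>}"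

lemma finite_Subs: "finite (Subs n \<tau>)"
  unfolding Subs_def by (rule finite_subset[of _ "Pow {..<n}"]) auto

lemma card_Subs: "card (Subs n \<tau>) = n choose \<tau>"
  unfolding Subs_def using n_subsets[of "{..<n}" \<tau>] by simp

lemma count_pair:
  assumes "i < n" "j < n" "1 \<le> \<tau>" "2 \<le> n"
  shows "real (card {S \<in> Subs n \<tau>. i \<in> S \<and> j \<in> S})
     = (if 2 \<le> \<tau> then real ((n-2) choose (\<tau>-2)) else 0)
       + (if i = j then real ((n-2) choose (\<tau>-1)) else 0)"
proof (cases "i = j")
  case True
  have "{S \<in> Subs n \<tau>. i \<in> S \<and> j \<in> S} = {S. S \<subseteq> {..<n} \<and> card S = \<tau> \<and> {i} \<subseteq> S}"
    using True by (auto simp: Subs_def)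
  also have "card \<dots> = (n - 1) choose (\<tau> - 1)"
    using card_subsets_containing[of "{..<n}" "{i}" \<tau>] assms by simp
  finally have c: "card {S \<in> Subs n \<tau>. i \<in> S \<and> j \<in> S} = (n - 1) choose (\<tau> - 1)" .
  show ?thesis
  proof (cases "2 \<le> \<tau>")
    case True
    have "n - 1 = Suc (n-2)" "\<tau> - 1 = Suc (\<tau> - 2)" using assms True by auto
    then have "(n - 1) choose (\<tau> - 1) = ((n-2) choose (\<tau>-2)) + ((n-2) choose (\<tau>-1))"
      by (simp add: binomial_Suc_Suc)
    then show ?thesis using c True \<open>i = j\<close> by simp
  next
    case False
    then have "\<tau> = 1" using assms by auto
    then show ?thesis using c \<open>i = j\<close> by simp
  qed
next
  case False
  show ?thesis
  proof (cases "2 \<le> \<tau>")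
    case True
    have "{S \<in> Subs n \<tau>. i \<in> S \<and> j \<in> S} = {S. S \<subseteq> {..<n} \<and> card S = \<tau> \<and> {i,j} \<subseteq> S}"
      by (auto simp: Subs_def)
    also have "card \<dots> = (n - 2) choose (\<tau> - 2)"
      using card_subsets_containing[of "{..<n}" "{i,j}" \<tau>] assms True False by (simp add: numeral_2_eq_2)
    finally show ?thesis using True False by simp
  next
    case nt: False
    have "{S \<in> Subs n \<tau>. i \<in> S \<and> j \<in> S} = {}"
    proof (rule ccontr)
      assume "{S \<in> Subs n \<tau>. i \<in> S \<and> j \<in> S} \<noteq> {}"
      then obtain S where S: "S \<in> Subs n \<tau>" "i \<in> S" "j \<in> S" by blast
      then have "finite S" "card S = \<tau>" unfolding Subs_def by (auto intro: finite_subset)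
      then have "card {i,j} \<le> \<tau>" using S card_mono[of S "{i,j}"] by auto
      then show False using False nt by simp
    qed
    then show ?thesis using nt False by (simp only: card.empty) simp
  qed
qed

lemma sum_subs_sq:
  fixes b :: "nat \<Rightarrow> 'a::real_inner"
  assumes "(\<Sum>i<n. b i) = 0" "1 \<le> \<tau>" "2 \<le> n"
  shows "(\<Sum>S\<in>Subs n \<tau>. (norm (\<Sum>i\<in>S. b i))\<^sup>2) = real ((n-2) choose (\<tau>-1)) * (\<Sum>i<n. (norm (b i))\<^sup>2)"
proof -
  define c2 where "c2 = (if 2 \<le> \<tau> then real ((n-2) choose (\<tau>-2)) else 0)"
  define c where "c = real ((n-2) choose (\<tau>-1))"
  have step1: "(norm (\<Sum>i\<in>S. b i))\<^sup>2 = (\<Sum>i<n. \<Sum>j<n. if i \<in> S \<and> j \<in> S then inner (b i) (b j) else 0)"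
    if "S \<in> Subs n \<tau>" for S
  proof -
    have sub: "S \<subseteq> {..<n}" using that by (auto simp: Subs_def)
    have "(norm (\<Sum>i\<in>S. b i))\<^sup>2 = (\<Sum>i\<in>S. \<Sum>j\<in>S. inner (b i) (b j))"
      by (simp add: power2_norm_eq_inner inner_sum_left inner_sum_right) (rule sum.swap)
    also have "\<dots> = (\<Sum>i<n. if i \<in> S then (\<Sum>j<n. if j \<in> S then inner (b i) (b j) else 0) else 0)"
      using sub by (simp add: sum.inter_restrict[symmetric] Int_absorb1 Int_absorb2)
    also have "\<dots> = (\<Sum>i<n. \<Sum>j<n. if i \<in> S \<and> j \<in> S then inner (b i) (b j) else 0)"
      by (intro sum.cong) auto
    finally show ?thesis .
  qed
  have "(\<Sum>S\<in>Subs n \<tau>. (norm (\<Sum>i\<in>S. b i))\<^sup>2)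
      = (\<Sum>S\<in>Subs n \<tau>. \<Sum>i<n. \<Sum>j<n. if i \<in> S \<and> j \<in> S then inner (b i) (b j) else 0)"
    using step1 by (rule sum.cong[OF refl])
  also have "\<dots> = (\<Sum>i<n. \<Sum>j<n. \<Sum>S\<in>Subs n \<tau>. if i \<in> S \<and> j \<in> S then inner (b i) (b j) else 0)"
    by (subst sum.swap) (subst sum.swap, rule refl)
  also have "\<dots> = (\<Sum>i<n. \<Sum>j<n. inner (b i) (b j) * real (card {S \<in> Subs n \<tau>. i \<in> S \<and> j \<in> S}))"
    by (intro sum.cong refl) (simp add: sum.inter_filter[symmetric] finite_Subs)
  also have "\<dots> = (\<Sum>i<n. \<Sum>j<n. inner (b i) (b j) * c2 + (if i = j then inner (b i) (b j) * c else 0))"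
    using count_pair[OF _ _ assms(2,3)] unfolding c2_def c_def
    by (intro sum.cong refl) (simp add: distrib_left)
  also have "\<dots> = c2 * inner (\<Sum>i<n. b i) (\<Sum>j<n. b j) + (\<Sum>i<n. inner (b i) (b i) * c)"
    by (simp add: sum.distrib inner_sum_left inner_sum_right sum_distrib_left sum_distrib_right mult.commute) (rule sum.swap)
  also have "\<dots> = c * (\<Sum>i<n. (norm (b i))\<^sup>2)"
    using assms(1) by (simp add: power2_norm_eq_inner sum_distrib_left mult.commute)
  finally show ?thesis unfolding c_def .
qed

lemma binom_ratio:
  assumes "1 \<le> \<tau>" "\<tau> \<le> n"
  shows "real ((n-2) choose (\<tau>-1)) * (real n * (real n - 1)) = real (n choose \<tau>) * (real \<tau> * (real n - real \<tau>))"
proof -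
  have a: "\<tau> * (n choose \<tau>) = n * ((n-1) choose (\<tau>-1))"
    using binomial_absorption[of "\<tau>-1" n] assms by simp
  have b: "(n - 1 - (\<tau> - 1)) * ((n-1) choose (\<tau>-1)) = (n-1) * ((n-1-1) choose (\<tau>-1))"
    by (rule binomial_absorb_comp)
  have "n - 1 - (\<tau> - 1) = n - \<tau>" using assms by simp
  then have b': "(n - \<tau>) * ((n-1) choose (\<tau>-1)) = (n-1) * ((n-2) choose (\<tau>-1))"
    using b by (simp add: numeral_2_eq_2)
  have "(n - \<tau>) * (\<tau> * (n choose \<tau>)) = n * ((n-1) * ((n-2) choose (\<tau>-1)))"
    using a b' by (metis mult.left_commute)
  then have "real ((n - \<tau>) * (\<tau> * (n choose \<tau>))) = real (n * ((n-1) * ((n-2) choose (\<tau>-1))))"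
    by simp
  then show ?thesis using assms by (simp add: of_nat_diff algebra_simps)
qed

definition vS :: "nat \<Rightarrow> nat \<Rightarrow> nat set \<Rightarrow> nat \<Rightarrow> real" where
  "vS n \<tau> S = (\<lambda>i. if i \<in> S then real n / real \<tau> else 0)"

lemma mb_expect:
  fixes G :: "(nat \<Rightarrow> real) \<Rightarrow> real"
  assumes P: "prob_space M" and mb: "minibatch_sampling M n \<tau> v" and t: "1 \<le> \<tau>" "\<tau> \<le> n"
    and Gm: "(\<lambda>\<omega>. G (v \<omega>)) \<in> borel_measurable M"
    and Gl: "\<And>u u'. (\<forall>i<n. u i = u' i) \<Longrightarrow> G u = G u'"
  shows "integrable M (\<lambda>\<omega>. G (v \<omega>)) \<and>
         integral\<^sup>L M (\<lambda>\<omega>. G (v \<omega>)) = (\<Sum>S\<in>Subs n \<tau>. G (vS n \<tau> S)) / real (n choose \<tau>)"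
proof -
  interpret prob_space M by (rule P)
  define E where "E S = {\<omega> \<in> space M. \<forall>i<n. v \<omega> i = vS n \<tau> S i}" for S
  have EsEm: "E S \<in> sets M \<and> measure M (E S) = 1 / real (n choose \<tau>)" if "S \<in> Subs n \<tau>" for S
  proof -
    have "S \<subseteq> {..<n} \<and> card S = \<tau>" using that by (simp add: Subs_def)
    with mb[unfolded minibatch_sampling_def, THEN conjunct2, rule_format, of S]
    show ?thesis unfolding E_def vS_def by blast
  qed
  have Es: "E S \<in> sets M" and Em: "measure M (E S) = 1 / real (n choose \<tau>)" if "S \<in> Subs n \<tau>" for S
    using EsEm[OF that] by auto
  have npos: "real n / real \<tau> \<noteq> 0" using t by auto
  have disj: "disjoint_family_on E (Subs n \<tau>)"
    unfolding disjoint_family_on_def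
  proof (intro ballI impI)
    fix S S' assume S: "S \<in> Subs n \<tau>" "S' \<in> Subs n \<tau>" "S \<noteq> S'"
    then obtain i where i: "i < n" "(i \<in> S) \<noteq> (i \<in> S')" unfolding Subs_def by blast
    show "E S \<inter> E S' = {}"
    proof (rule ccontr)
      assume "E S \<inter> E S' \<noteq> {}"
      then obtain \<omega> where "\<omega> \<in> E S" "\<omega> \<in> E S'" by blast
      then have "vS n \<tau> S i = vS n \<tau> S' i" using i unfolding E_def by auto
      then show False using i npos unfolding vS_def by (auto split: if_splits)
    qed
  qed
  have C0: "real (n choose \<tau>) > 0" using t by simp
  have "measure M (\<Union>S\<in>Subs n \<tau>. E S) = (\<Sum>S\<in>Subs n \<tau>. measure M (E S))"
    using Es disj by (intro measure_finite_Union finite_Subs) auto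
  also have "\<dots> = 1" using Em C0 by (simp add: card_Subs)
  finally have AEU: "AE \<omega> in M. \<omega> \<in> (\<Union>S\<in>Subs n \<tau>. E S)" by (rule AE_prob_1)
  define H where "H \<omega> = (\<Sum>S\<in>Subs n \<tau>. indicator (E S) \<omega> * G (vS n \<tau> S))" for \<omega>
  have Hm: "H \<in> borel_measurable M" unfolding H_def using Es by (intro borel_measurable_sum) auto
  have Ii: "integrable M (\<lambda>\<omega>. indicator (E S) \<omega> * G (vS n \<tau> S))" if "S \<in> Subs n \<tau>" for S
  proof -
    have "emeasure M (E S) < top" by (simp add: less_top[symmetric])
    then show ?thesis using Es[OF that] by (intro integrable_mult_left integrable_real_indicator) auto
  qed
  have Hi: "integrable M H" unfolding H_def using Ii by (intro Bochner_Integration.integrable_sum) auto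
  have HI: "integral\<^sup>L M H = (\<Sum>S\<in>Subs n \<tau>. G (vS n \<tau> S)) / real (n choose \<tau>)"
  proof -
    have "integral\<^sup>L M H = (\<Sum>S\<in>Subs n \<tau>. integral\<^sup>L M (\<lambda>\<omega>. indicator (E S) \<omega> * G (vS n \<tau> S)))"
      unfolding H_def using Ii by (intro Bochner_Integration.integral_sum) auto
    also have "\<dots> = (\<Sum>S\<in>Subs n \<tau>. G (vS n \<tau> S) / real (n choose \<tau>))"
      using Es Em by (intro sum.cong refl) (simp add: Int_absorb2 sets.sets_into_space)
    finally show ?thesis by (simp add: sum_divide_distrib)
  qed
  have AEe: "AE \<omega> in M. G (v \<omega>) = H \<omega>"
    using AEU
  proof eventually_elim
    case (elim \<omega>)
    then obtain S0 where S0: "S0 \<in> Subs n \<tau>" "\<omega> \<in> E S0" by blast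
    have "H \<omega> = (\<Sum>S\<in>Subs n \<tau>. if S = S0 then G (vS n \<tau> S) else 0)"
      unfolding H_def
    proof (intro sum.cong refl)
      fix S assume S: "S \<in> Subs n \<tau>"
      show "indicator (E S) \<omega> * G (vS n \<tau> S) = (if S = S0 then G (vS n \<tau> S) else 0)"
      proof (cases "S = S0")
        case False
        then have "\<omega> \<notin> E S" using disj S S0 unfolding disjoint_family_on_def by blast
        then show ?thesis using False by simp
      qed (use S0 in simp)
    qed
    also have "\<dots> = G (vS n \<tau> S0)" using S0 finite_Subs by simp
    also have "\<dots> = G (v \<omega>)" using S0(2) unfolding E_def by (intro Gl) auto
    finally show ?case by simp
  qed
  have "integrable M (\<lambda>\<omega>. G (v \<omega>))"
    using integrable_cong_AE[OF Gm Hm AEe] Hi by simp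
  moreover have "integral\<^sup>L M (\<lambda>\<omega>. G (v \<omega>)) = integral\<^sup>L M H"
    by (rule integral_cong_AE[OF Gm Hm AEe])
  ultimately show ?thesis using HI by simp
qed

lemma Fsamp_vS:
  assumes "S \<subseteq> {..<n}" "1 \<le> n" "1 \<le> \<tau>"
  shows "Fsamp n Fs (vS n \<tau> S) y = (1 / real \<tau>) *\<^sub>R (\<Sum>i\<in>S. Fs i y)"
proof -
  have "(\<Sum>i<n. vS n \<tau> S i *\<^sub>R Fs i y) = (\<Sum>i<n. if i \<in> S then (real n / real \<tau>) *\<^sub>R Fs i y else 0)"
    unfolding vS_def by (intro sum.cong) auto
  also have "\<dots> = (\<Sum>i\<in>{..<n} \<inter> S. (real n / real \<tau>) *\<^sub>R Fs i y)"
    by (simp add: sum.inter_restrict)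
  also have "{..<n} \<inter> S = S" using assms by auto
  finally show ?thesis using assms by (simp add: Fsamp_def scaleR_sum_right[symmetric])
qed

lemma Fsamp_local:
  "(\<forall>i<n. u i = u' i) \<Longrightarrow> Fsamp n Fs u y = Fsamp n Fs u' y"
  unfolding Fsamp_def by (intro arg_cong[where f="\<lambda>z. _ *\<^sub>R z"] sum.cong) auto

lemma centered_le:
  fixes a :: "nat \<Rightarrow> 'a::real_inner"
  assumes "1 \<le> n"
  shows "(\<Sum>i<n. (norm (a i - (1 / real n) *\<^sub>R (\<Sum>j<n. a j)))\<^sup>2) \<le> (\<Sum>i<n. (norm (a i))\<^sup>2)"
    and "(\<Sum>i<n. a i - (1 / real n) *\<^sub>R (\<Sum>j<n. a j)) = 0"
proof -
  define m where "m = (1 / real n) *\<^sub>R (\<Sum>j<n. a j)"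
  have sm: "(\<Sum>j<n. a j) = real n *\<^sub>R m" unfolding m_def using assms by simp
  have "(\<Sum>i<n. (norm (a i - m))\<^sup>2) = (\<Sum>i<n. (norm (a i))\<^sup>2 - 2 * inner (a i) m + (norm m)\<^sup>2)"
    by (intro sum.cong refl) (simp add: power2_norm_eq_inner inner_diff_left inner_diff_right inner_commute)
  also have "\<dots> = (\<Sum>i<n. (norm (a i))\<^sup>2) - 2 * inner (\<Sum>i<n. a i) m + real n * (norm m)\<^sup>2"
    by (simp add: sum.distrib sum_subtractf inner_sum_left sum_distrib_left)
  also have "\<dots> = (\<Sum>i<n. (norm (a i))\<^sup>2) - real n * (norm m)\<^sup>2"
    unfolding sm by (simp add: power2_norm_eq_inner)
  also have "\<dots> \<le> (\<Sum>i<n. (norm (a i))\<^sup>2)" by simp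
  finally show "(\<Sum>i<n. (norm (a i - (1 / real n) *\<^sub>R (\<Sum>j<n. a j)))\<^sup>2) \<le> (\<Sum>i<n. (norm (a i))\<^sup>2)"
    unfolding m_def .
  show "(\<Sum>i<n. a i - (1 / real n) *\<^sub>R (\<Sum>j<n. a j)) = 0"
    using sm unfolding m_def[symmetric] by (simp add: sum_subtractf sum_constant_scaleR)
qed

lemma subs_avg:
  fixes b :: "nat \<Rightarrow> 'a::real_inner"
  assumes "(\<Sum>i<n. b i) = 0" "1 \<le> \<tau>" "\<tau> \<le> n" "2 \<le> n"
  shows "(\<Sum>S\<in>Subs n \<tau>. (norm ((1 / real \<tau>) *\<^sub>R (\<Sum>i\<in>S. b i)))\<^sup>2) / real (n choose \<tau>)
       = 1 / (real n * real \<tau>) * ((real n - real \<tau>) / (real n - 1)) * (\<Sum>i<n. (norm (b i))\<^sup>2)"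
proof -
  define X where "X = (\<Sum>i<n. (norm (b i))\<^sup>2)"
  define c where "c = real ((n-2) choose (\<tau>-1))"
  define C where "C = real (n choose \<tau>)"
  have "(\<Sum>S\<in>Subs n \<tau>. (norm ((1 / real \<tau>) *\<^sub>R (\<Sum>i\<in>S. b i)))\<^sup>2)
      = (1 / real \<tau>)\<^sup>2 * (\<Sum>S\<in>Subs n \<tau>. (norm (\<Sum>i\<in>S. b i))\<^sup>2)"
    by (simp add: power_mult_distrib sum_distrib_left power_divide)
  also have "\<dots> = (1 / real \<tau>)\<^sup>2 * c * X" unfolding c_def X_def using sum_subs_sq[OF assms(1,2,4)] by simp
  finally have e: "(\<Sum>S\<in>Subs n \<tau>. (norm ((1 / real \<tau>) *\<^sub>R (\<Sum>i\<in>S. b i)))\<^sup>2) = (1 / real \<tau>)\<^sup>2 * c * X" .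
  have r: "c * (real n * (real n - 1)) = C * (real \<tau> * (real n - real \<tau>))"
    unfolding c_def C_def by (rule binom_ratio[OF assms(2,3)])
  have pos: "C > 0" "real \<tau> > 0" "real n - 1 > 0" "real n > 0" using assms by (auto simp: C_def)
  have "(1 / real \<tau>)\<^sup>2 * c * X / C = (c * (real n * (real n - 1))) * X / (C * real \<tau>^2 * real n * (real n - 1))"
    using pos by (simp add: field_simps power2_eq_square)
  also have "\<dots> = (C * (real \<tau> * (real n - real \<tau>))) * X / (C * real \<tau>^2 * real n * (real n - 1))"
    by (simp only: r)
  also have "\<dots> = 1 / (real n * real \<tau>) * ((real n - real \<tau>) / (real n - 1)) * X"
    using pos by (simp add: field_simps power2_eq_square)
  finally show ?thesis unfolding e C_def X_def .
qed

lemma Fsamp_meas: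
  assumes "\<And>i. i < n \<Longrightarrow> (\<lambda>\<omega>. v \<omega> i) \<in> borel_measurable M"
  shows "(\<lambda>\<omega>. Fsamp n Fs (v \<omega>) y) \<in> borel_measurable M"
proof -
  have "(\<lambda>\<omega>. \<Sum>i<n. v \<omega> i *\<^sub>R Fs i y) \<in> borel_measurable M"
    using assms by (intro borel_measurable_sum borel_measurable_scaleR borel_measurable_const) auto
  then show ?thesis unfolding Fsamp_def by (intro borel_measurable_scaleR borel_measurable_const)
qed

lemma part2:
  fixes M :: "'w measure" and Fs :: "nat \<Rightarrow> real ^ 'd \<Rightarrow> real ^ 'd"
  assumes P: "prob_space M" and n2: "2 \<le> n" and t: "1 \<le> \<tau>" "\<tau> \<le> n"
    and mb: "minibatch_sampling M n \<tau> v"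
    and Lip: "\<And>i x y. i < n \<Longrightarrow> norm (Fs i x - Fs i y) \<le> L i * norm (x - y)"
    and F0: "Fmean n Fs xstar = 0"
  shows "(\<forall>x.
              integrable M (\<lambda>\<omega>. (norm ((Fsamp n Fs (v \<omega>) x - Fsamp n Fs (v \<omega>) xstar)
                                         - (Fmean n Fs x - Fmean n Fs xstar)))\<^sup>2)
            \<and> integral\<^sup>L M (\<lambda>\<omega>. (norm ((Fsamp n Fs (v \<omega>) x - Fsamp n Fs (v \<omega>) xstar)
                                         - (Fmean n Fs x - Fmean n Fs xstar)))\<^sup>2)
                \<le> (2 / (real n * real \<tau>) * ((real n - real \<tau>) / (real n - 1)) * (\<Sum>i<n. (L i)\<^sup>2)) / 2 * (norm (x - xstar))\<^sup>2)
          \<and> integrable M (\<lambda>\<omega>. (norm (Fsamp n Fs (v \<omega>) xstar))\<^sup>2)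
          \<and> integral\<^sup>L M (\<lambda>\<omega>. (norm (Fsamp n Fs (v \<omega>) xstar))\<^sup>2)
              = 1 / (real n * real \<tau>) * ((real n - real \<tau>) / (real n - 1))
                  * (\<Sum>i<n. (norm (Fs i xstar))\<^sup>2)"
proof -
  have n1: "1 \<le> n" using n2 by simp
  have vm: "\<And>i. i < n \<Longrightarrow> (\<lambda>\<omega>. v \<omega> i) \<in> borel_measurable M"
    using mb unfolding minibatch_sampling_def by blast
  note fm = Fsamp_meas[of n v M Fs, OF vm]
  define K where "K = 1 / (real n * real \<tau>) * ((real n - real \<tau>) / (real n - 1))"
  have K0: "K \<ge> 0" unfolding K_def using t n2 by auto
  have I1: "integrable M (\<lambda>\<omega>. (norm ((Fsamp n Fs (v \<omega>) x - Fsamp n Fs (v \<omega>) xstar)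
                                         - (Fmean n Fs x - Fmean n Fs xstar)))\<^sup>2)
            \<and> integral\<^sup>L M (\<lambda>\<omega>. (norm ((Fsamp n Fs (v \<omega>) x - Fsamp n Fs (v \<omega>) xstar)
                                         - (Fmean n Fs x - Fmean n Fs xstar)))\<^sup>2)
                \<le> (2 / (real n * real \<tau>) * ((real n - real \<tau>) / (real n - 1)) * (\<Sum>i<n. (L i)\<^sup>2)) / 2 * (norm (x - xstar))\<^sup>2" for x
  proof -
    define G where "G u = (norm ((Fsamp n Fs u x - Fsamp n Fs u xstar)
                                         - (Fmean n Fs x - Fmean n Fs xstar)))\<^sup>2" for u
    have Gm: "(\<lambda>\<omega>. G (v \<omega>)) \<in> borel_measurable M"
      unfolding G_def using fm[of x] fm[of xstar]
      by (intro borel_measurable_power borel_measurable_norm borel_measurable_diff borel_measurable_const) auto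
    have Gl: "G u = G u'" if "\<forall>i<n. u i = u' i" for u u'
      unfolding G_def using Fsamp_local[OF that] by metis
    note ex = mb_expect[OF P mb t Gm Gl]
    define a where "a i = Fs i x - Fs i xstar" for i
    define m where "m = (1 / real n) *\<^sub>R (\<Sum>j<n. a j)"
    have mF: "Fmean n Fs x - Fmean n Fs xstar = m"
      unfolding m_def a_def Fmean_def by (simp add: scaleR_diff_right sum_subtractf)
    have GS: "G (vS n \<tau> S) = (norm ((1 / real \<tau>) *\<^sub>R (\<Sum>i\<in>S. a i - m)))\<^sup>2" if "S \<in> Subs n \<tau>" for S
    proof -
      have S: "S \<subseteq> {..<n}" "card S = \<tau>" using that by (auto simp: Subs_def)
      have "(1 / real \<tau>) *\<^sub>R (\<Sum>i\<in>S. a i - m) = (1 / real \<tau>) *\<^sub>R (\<Sum>i\<in>S. a i) - m"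
        using S t by (simp add: sum_subtractf sum_constant_scaleR scaleR_diff_right del: sum_constant)
      then show ?thesis unfolding G_def mF Fsamp_vS[OF S(1) n1 t(1)]
        by (simp add: a_def scaleR_diff_right sum_subtractf)
    qed
    have "integral\<^sup>L M (\<lambda>\<omega>. G (v \<omega>)) = (\<Sum>S\<in>Subs n \<tau>. (norm ((1 / real \<tau>) *\<^sub>R (\<Sum>i\<in>S. a i - m)))\<^sup>2) / real (n choose \<tau>)"
      using ex GS by simp
    also have "\<dots> = K * (\<Sum>i<n. (norm (a i - m))\<^sup>2)"
      unfolding K_def m_def by (rule subs_avg[OF centered_le(2)[OF n1] t n2])
    also have "\<dots> \<le> K * (\<Sum>i<n. (norm (a i))\<^sup>2)"
      unfolding m_def using K0 centered_le(1)[OF n1] by (rule mult_left_mono[rotated])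
    also have "\<dots> \<le> K * (\<Sum>i<n. (L i)\<^sup>2 * (norm (x - xstar))\<^sup>2)"
    proof (intro mult_left_mono K0 sum_mono)
      fix i assume "i \<in> {..<n}"
      then have "norm (a i) \<le> L i * norm (x - xstar)" using Lip unfolding a_def by simp
      then have "(norm (a i))\<^sup>2 \<le> (L i * norm (x - xstar))\<^sup>2" by (intro power_mono) auto
      then show "(norm (a i))\<^sup>2 \<le> (L i)\<^sup>2 * (norm (x - xstar))\<^sup>2" by (simp add: power_mult_distrib)
    qed
    also have "\<dots> = (2 / (real n * real \<tau>) * ((real n - real \<tau>) / (real n - 1)) * (\<Sum>i<n. (L i)\<^sup>2)) / 2 * (norm (x - xstar))\<^sup>2"
    proof -
      have "K * (\<Sum>i<n. (L i)\<^sup>2 * (norm (x - xstar))\<^sup>2) = (K * (\<Sum>i<n. (L i)\<^sup>2)) * (norm (x - xstar))\<^sup>2"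
        by (simp add: sum_distrib_right mult.assoc)
      moreover have "K * (\<Sum>i<n. (L i)\<^sup>2) = (2 / (real n * real \<tau>) * ((real n - real \<tau>) / (real n - 1)) * (\<Sum>i<n. (L i)\<^sup>2)) / 2"
        unfolding K_def by (simp add: divide_simps algebra_simps)
      ultimately show ?thesis by simp
    qed
    finally show ?thesis using ex unfolding G_def by simp
  qed
  have I2: "integrable M (\<lambda>\<omega>. (norm (Fsamp n Fs (v \<omega>) xstar))\<^sup>2)
          \<and> integral\<^sup>L M (\<lambda>\<omega>. (norm (Fsamp n Fs (v \<omega>) xstar))\<^sup>2)
              = K * (\<Sum>i<n. (norm (Fs i xstar))\<^sup>2)"
  proof -
    define G where "G u = (norm (Fsamp n Fs u xstar))\<^sup>2" for u
    have Gm: "(\<lambda>\<omega>. G (v \<omega>)) \<in> borel_measurable M"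
      unfolding G_def using fm[of xstar]
      by (intro borel_measurable_power borel_measurable_norm) auto
    have Gl: "G u = G u'" if "\<forall>i<n. u i = u' i" for u u'
      unfolding G_def using Fsamp_local[OF that] by metis
    note ex = mb_expect[OF P mb t Gm Gl]
    have s0: "(\<Sum>i<n. Fs i xstar) = 0" using F0 n1 unfolding Fmean_def by simp
    have GS: "G (vS n \<tau> S) = (norm ((1 / real \<tau>) *\<^sub>R (\<Sum>i\<in>S. Fs i xstar)))\<^sup>2" if "S \<in> Subs n \<tau>" for S
    proof -
      have S: "S \<subseteq> {..<n}" using that by (auto simp: Subs_def)
      show ?thesis unfolding G_def Fsamp_vS[OF S n1 t(1)] ..
    qed
    have "integral\<^sup>L M (\<lambda>\<omega>. G (v \<omega>)) = (\<Sum>S\<in>Subs n \<tau>. (norm ((1 / real \<tau>) *\<^sub>R (\<Sum>i\<in>S. Fs i xstar)))\<^sup>2) / real (n choose \<tau>)"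
      using ex GS by simp
    also have "\<dots> = K * (\<Sum>i<n. (norm (Fs i xstar))\<^sup>2)"
      unfolding K_def by (rule subs_avg[OF s0 t n2])
    finally show ?thesis using ex unfolding G_def by simp
  qed
  show ?thesis using I1 I2 unfolding K_def by blast
qed

lemma part1:
  fixes M :: "'w measure" and Fs :: "nat \<Rightarrow> real ^ 'd \<Rightarrow> real ^ 'd"
  assumes P: "prob_space M" and n1: "1 \<le> n"
    and sv: "sampling_vector M n v"
    and Lip: "\<And>i x y. i < n \<Longrightarrow> norm (Fs i x - Fs i y) \<le> L i * norm (x - y)"
  shows "\<exists>\<delta>::real. \<forall>x.
              integrable M (\<lambda>\<omega>. (norm ((Fsamp n Fs (v \<omega>) x - Fsamp n Fs (v \<omega>) xstar)
                                         - (Fmean n Fs x - Fmean n Fs xstar)))\<^sup>2)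
            \<and> integral\<^sup>L M (\<lambda>\<omega>. (norm ((Fsamp n Fs (v \<omega>) x - Fsamp n Fs (v \<omega>) xstar)
                                         - (Fmean n Fs x - Fmean n Fs xstar)))\<^sup>2)
                \<le> \<delta> / 2 * (norm (x - xstar))\<^sup>2"
proof -
  interpret prob_space M by (rule P)
  have vm: "\<And>i. i < n \<Longrightarrow> (\<lambda>\<omega>. v \<omega> i) \<in> borel_measurable M"
    and vi: "\<And>i. i < n \<Longrightarrow> integrable M (\<lambda>\<omega>. v \<omega> i)"
    and vi2: "\<And>i. i < n \<Longrightarrow> integrable M (\<lambda>\<omega>. (v \<omega> i)\<^sup>2)"
    using sv unfolding sampling_vector_def by blast+
  have wi: "integrable M (\<lambda>\<omega>. (v \<omega> i - 1)\<^sup>2)" if "i < n" for i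
  proof -
    have "integrable M (\<lambda>\<omega>. (v \<omega> i)\<^sup>2 - 2 * v \<omega> i + 1)"
      using vi[OF that] vi2[OF that] by auto
    moreover have "(\<lambda>\<omega>. (v \<omega> i - 1)\<^sup>2) = (\<lambda>\<omega>. (v \<omega> i)\<^sup>2 - 2 * v \<omega> i + 1)"
      by (rule ext) (simp add: power2_diff)
    ultimately show ?thesis by simp
  qed
  note fm = Fsamp_meas[of n v M Fs, OF vm]
  define \<delta> where "\<delta> = 2 * (\<Sum>i<n. integral\<^sup>L M (\<lambda>\<omega>. (v \<omega> i - 1)\<^sup>2) * ((L i)\<^sup>2 / real n))"
  show ?thesis
  proof (intro exI allI)
    fix x
    define r where "r = norm (x - xstar)"
    define a where "a i = Fs i x - Fs i xstar" for i
    define w where "w \<omega> = (Fsamp n Fs (v \<omega>) x - Fsamp n Fs (v \<omega>) xstar) - (Fmean n Fs x - Fmean n Fs xstar)" for \<omega>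
    define B where "B \<omega> = (\<Sum>i<n. (v \<omega> i - 1)\<^sup>2 * ((L i)\<^sup>2 / real n * r\<^sup>2))" for \<omega>
    have weq: "w \<omega> = (1 / real n) *\<^sub>R (\<Sum>i<n. (v \<omega> i - 1) *\<^sub>R a i)" for \<omega>
    proof -
      have "w \<omega> = (1 / real n) *\<^sub>R ((\<Sum>i<n. v \<omega> i *\<^sub>R Fs i x) - (\<Sum>i<n. v \<omega> i *\<^sub>R Fs i xstar)
                  - ((\<Sum>i<n. Fs i x) - (\<Sum>i<n. Fs i xstar)))"
        unfolding w_def Fsamp_def Fmean_def by (simp add: algebra_simps)
      also have "(\<Sum>i<n. v \<omega> i *\<^sub>R Fs i x) - (\<Sum>i<n. v \<omega> i *\<^sub>R Fs i xstar)
                  - ((\<Sum>i<n. Fs i x) - (\<Sum>i<n. Fs i xstar)) = (\<Sum>i<n. (v \<omega> i - 1) *\<^sub>R a i)"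
        unfolding a_def sum_subtractf[symmetric] by (intro sum.cong refl) (simp add: algebra_simps)
      finally show ?thesis .
    qed
    have bound: "(norm (w \<omega>))\<^sup>2 \<le> B \<omega>" for \<omega>
    proof -
      define f where "f i = \<bar>v \<omega> i - 1\<bar> * norm (a i)" for i
      have "norm (w \<omega>) \<le> (1 / real n) * (\<Sum>i<n. f i)"
      proof -
        have "norm (\<Sum>i<n. (v \<omega> i - 1) *\<^sub>R a i) \<le> (\<Sum>i<n. norm ((v \<omega> i - 1) *\<^sub>R a i))"
          by (rule norm_sum)
        also have "\<dots> = (\<Sum>i<n. f i)" unfolding f_def by simp
        finally show ?thesis unfolding weq using n1 by (simp add: divide_right_mono)
      qed
      then have "(norm (w \<omega>))\<^sup>2 \<le> ((1 / real n) * (\<Sum>i<n. f i))\<^sup>2"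
        by (intro power_mono) auto
      also have "\<dots> = (1 / real n)\<^sup>2 * (\<Sum>i<n. f i)\<^sup>2" by (simp add: power_mult_distrib power_divide)
      also have "\<dots> \<le> (1 / real n)\<^sup>2 * ((\<Sum>i<n. (f i)\<^sup>2) * real n)"
        using sum_squared_le_sum_of_squares[of f "{..<n}"] by (intro mult_left_mono) auto
      also have "\<dots> = (\<Sum>i<n. (f i)\<^sup>2 / real n)"
      proof -
        have "(1 / real n)\<^sup>2 * (X * real n) = X / real n" for X
          using n1 by (simp add: power2_eq_square field_simps)
        then show ?thesis by (simp add: sum_divide_distrib)
      qed
      also have "\<dots> \<le> B \<omega>" unfolding B_def
      proof (intro sum_mono)
        fix i assume "i \<in> {..<n}"
        then have "norm (a i) \<le> L i * r" using Lip unfolding a_def r_def by simp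
        then have "(norm (a i))\<^sup>2 \<le> (L i * r)\<^sup>2" by (intro power_mono) auto
        then have "(v \<omega> i - 1)\<^sup>2 * (norm (a i))\<^sup>2 \<le> (v \<omega> i - 1)\<^sup>2 * (L i * r)\<^sup>2"
          by (intro mult_left_mono) auto
        then show "(f i)\<^sup>2 / real n \<le> (v \<omega> i - 1)\<^sup>2 * ((L i)\<^sup>2 / real n * r\<^sup>2)"
          unfolding f_def using n1 by (simp add: power_mult_distrib divide_right_mono field_simps)
      qed
      finally show ?thesis .
    qed
    have Bi: "integrable M B" unfolding B_def using wi by (intro Bochner_Integration.integrable_sum) auto
    have wm: "(\<lambda>\<omega>. (norm (w \<omega>))\<^sup>2) \<in> borel_measurable M"
      unfolding w_def using fm[of x] fm[of xstar]
      by (intro borel_measurable_power borel_measurable_norm borel_measurable_diff borel_measurable_const) auto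
    have wi2: "integrable M (\<lambda>\<omega>. (norm (w \<omega>))\<^sup>2)"
    proof (rule Bochner_Integration.integrable_bound[OF Bi wm])
      show "AE \<omega> in M. norm ((norm (w \<omega>))\<^sup>2) \<le> norm (B \<omega>)"
        using bound by (intro AE_I2) (auto intro: order_trans[OF _ abs_ge_self])
    qed
    have "integral\<^sup>L M (\<lambda>\<omega>. (norm (w \<omega>))\<^sup>2) \<le> integral\<^sup>L M B"
      using wi2 Bi bound by (intro integral_mono) auto
    also have "integral\<^sup>L M B = (\<Sum>i<n. integral\<^sup>L M (\<lambda>\<omega>. (v \<omega> i - 1)\<^sup>2) * ((L i)\<^sup>2 / real n * r\<^sup>2))"
      unfolding B_def using wi by (subst Bochner_Integration.integral_sum) auto
    also have "\<dots> = \<delta> / 2 * r\<^sup>2"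
      unfolding \<delta>_def by (simp add: sum_distrib_right mult.assoc)
    finally show "integrable M (\<lambda>\<omega>. (norm ((Fsamp n Fs (v \<omega>) x - Fsamp n Fs (v \<omega>) xstar)
                                         - (Fmean n Fs x - Fmean n Fs xstar)))\<^sup>2)
            \<and> integral\<^sup>L M (\<lambda>\<omega>. (norm ((Fsamp n Fs (v \<omega>) x - Fsamp n Fs (v \<omega>) xstar)
                                         - (Fmean n Fs x - Fmean n Fs xstar)))\<^sup>2)
                \<le> \<delta> / 2 * (norm (x - xstar))\<^sup>2"
      using wi2 unfolding w_def r_def by simp
  qed
qed

theorem proposition3p3:
  fixes M :: "'w measure" and n :: nat
    and Fs :: "nat \<Rightarrow> real ^ 'd \<Rightarrow> real ^ 'd" and L :: "nat \<Rightarrow> real"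
    and xstar :: "real ^ 'd" and v :: "'w \<Rightarrow> nat \<Rightarrow> real"
  assumes "prob_space M"
    and "n \<ge> 1"
    and "\<And>i x y. i < n \<Longrightarrow> norm (Fs i x - Fs i y) \<le> L i * norm (x - y)"
    and "Fmean n Fs xstar = 0"
  shows "(sampling_vector M n v \<longrightarrow>
           (\<exists>\<delta>::real. \<forall>x.
              integrable M (\<lambda>\<omega>. (norm ((Fsamp n Fs (v \<omega>) x - Fsamp n Fs (v \<omega>) xstar)
                                         - (Fmean n Fs x - Fmean n Fs xstar)))\<^sup>2)
            \<and> integral\<^sup>L M (\<lambda>\<omega>. (norm ((Fsamp n Fs (v \<omega>) x - Fsamp n Fs (v \<omega>) xstar)
                                         - (Fmean n Fs x - Fmean n Fs xstar)))\<^sup>2)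
                \<le> \<delta> / 2 * (norm (x - xstar))\<^sup>2))
       \<and> (\<forall>\<tau>::nat. n \<ge> 2 \<and> 1 \<le> \<tau> \<and> \<tau> \<le> n \<and> minibatch_sampling M n \<tau> v \<longrightarrow>
           (let \<delta> = 2 / (real n * real \<tau>) * ((real n - real \<tau>) / (real n - 1)) * (\<Sum>i<n. (L i)\<^sup>2)
            in (\<forall>x.
              integrable M (\<lambda>\<omega>. (norm ((Fsamp n Fs (v \<omega>) x - Fsamp n Fs (v \<omega>) xstar)
                                         - (Fmean n Fs x - Fmean n Fs xstar)))\<^sup>2)
            \<and> integral\<^sup>L M (\<lambda>\<omega>. (norm ((Fsamp n Fs (v \<omega>) x - Fsamp n Fs (v \<omega>) xstar)
                                         - (Fmean n Fs x - Fmean n Fs xstar)))\<^sup>2)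
                \<le> \<delta> / 2 * (norm (x - xstar))\<^sup>2)
          \<and> integrable M (\<lambda>\<omega>. (norm (Fsamp n Fs (v \<omega>) xstar))\<^sup>2)
          \<and> integral\<^sup>L M (\<lambda>\<omega>. (norm (Fsamp n Fs (v \<omega>) xstar))\<^sup>2)
              = 1 / (real n * real \<tau>) * ((real n - real \<tau>) / (real n - 1))
                  * (\<Sum>i<n. (norm (Fs i xstar))\<^sup>2)))"
proof (intro conjI impI allI)
  assume "sampling_vector M n v"
  then show "\<exists>\<delta>::real. \<forall>x.
              integrable M (\<lambda>\<omega>. (norm ((Fsamp n Fs (v \<omega>) x - Fsamp n Fs (v \<omega>) xstar)
                                         - (Fmean n Fs x - Fmean n Fs xstar)))\<^sup>2)
            \<and> integral\<^sup>L M (\<lambda>\<omega>. (norm ((Fsamp n Fs (v \<omega>) x - Fsamp n Fs (v \<omega>) xstar)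
                                         - (Fmean n Fs x - Fmean n Fs xstar)))\<^sup>2)
                \<le> \<delta> / 2 * (norm (x - xstar))\<^sup>2"
    using part1[of M n v Fs L xstar] assms by blast
next
  fix \<tau> :: nat
  assume h: "2 \<le> n \<and> 1 \<le> \<tau> \<and> \<tau> \<le> n \<and> minibatch_sampling M n \<tau> v"
  then show "let \<delta> = 2 / (real n * real \<tau>) * ((real n - real \<tau>) / (real n - 1)) * (\<Sum>i<n. (L i)\<^sup>2)
            in (\<forall>x.
              integrable M (\<lambda>\<omega>. (norm ((Fsamp n Fs (v \<omega>) x - Fsamp n Fs (v \<omega>) xstar)
                                         - (Fmean n Fs x - Fmean n Fs xstar)))\<^sup>2)
            \<and> integral\<^sup>L M (\<lambda>\<omega>. (norm ((Fsamp n Fs (v \<omega>) x - Fsamp n Fs (v \<omega>) xstar)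
                                         - (Fmean n Fs x - Fmean n Fs xstar)))\<^sup>2)
                \<le> \<delta> / 2 * (norm (x - xstar))\<^sup>2)
          \<and> integrable M (\<lambda>\<omega>. (norm (Fsamp n Fs (v \<omega>) xstar))\<^sup>2)
          \<and> integral\<^sup>L M (\<lambda>\<omega>. (norm (Fsamp n Fs (v \<omega>) xstar))\<^sup>2)
              = 1 / (real n * real \<tau>) * ((real n - real \<tau>) / (real n - 1))
                  * (\<Sum>i<n. (norm (Fs i xstar))\<^sup>2)"
    unfolding Let_def using part2[of M n \<tau> v Fs L xstar] assms h by blast
qed

end
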